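(* Let $k\ge 1$, let $a\in\mathbb{C}$ with $a\neq 0$, let $a_1,\dots,a_k,a_1^*,\dots,a_k^*\in\mathbb{Q}$, and let $\zeta_1,\dots,\zeta_k,\zeta_1^*,\dots,\zeta_k^*$ be roots of unity such that $$\sum_{i=1}^k a_i\zeta_i=a,\qquad \sum_{j=1}^k a_j^*\zeta_j^*=a,$$ and such that $\sum_{i\in I}a_i\zeta_i\neq 0$ for every $I$ with $\emptyset\neq I\subsetneq[k]$ and $\sum_{j\in J}a_j^*\zeta_j^*\neq 0$ for every $J$ with $\emptyset\neq J\subsetneq[k]$. Let $m=\prod_{p\le 2k,\ p\text{ prime}}p$. Then for every $j\in[k]$ there is an $i\in[k]$ such that $(\zeta_j^*/\zeta_i)^m=1$.
   Context: $[k]=\{1,\dots,k\}$. *)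

theory Defs
  imports Complex_Main "HOL-Computational_Algebra.Primes"
begin

definition root_of_unity :: "complex \<Rightarrow> bool" where
  "root_of_unity z \<longleftrightarrow> (\<exists>n::nat. n > 0 \<and> z ^ n = 1)"

end

theory Submission
  imports Defs "Berlekamp_Zassenhaus.Factor_Bound"
begin

interpretation of_rat_poly_hom: map_poly_idom_hom of_rat ..

abbreviation rc :: "rat poly \<Rightarrow> complex poly" where "rc \<equiv> map_poly of_rat"

lemma minpoly_ex:
  fixes g :: "rat poly" and \<xi> :: complex
  assumes "poly (rc g) \<xi> = 0" "g \<noteq> 0"
  shows "\<exists>f. lead_coeff f = 1 \<and> poly (rc f) \<xi> = 0 \<and> (\<forall>h. poly (rc h) \<xi> = 0 \<longrightarrow> f dvd h)"
proof -
  let ?P = "\<lambda>n. \<exists>f. f \<noteq> 0 \<and> poly (rc f) \<xi> = 0 \<and> degree f = n"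
  have ex: "?P (degree g)" using assms by blast
  define n where "n = (LEAST n. ?P n)"
  have "?P n" unfolding n_def by (rule LeastI_ex) (use ex in blast)
  then obtain f0 where f0: "f0 \<noteq> 0" "poly (rc f0) \<xi> = 0" "degree f0 = n" by blast
  have min: "n \<le> degree h" if "h \<noteq> 0" "poly (rc h) \<xi> = 0" for h
  proof -
    have "?P (degree h)" using that by blast
    thus ?thesis unfolding n_def by (rule Least_le)
  qed
  define f where "f = smult (inverse (lead_coeff f0)) f0"
  have lf: "lead_coeff f = 1" using f0(1) unfolding f_def by simp
  have fnz: "f \<noteq> 0" using lf by auto
  have rf: "poly (rc f) \<xi> = 0" using f0(2) unfolding f_def by (simp add: hom_distribs)
  have "degree f = degree f0" using f0(1) unfolding f_def by simp
  hence df: "degree f = n" using f0(3) by simp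
  have "f dvd h" if h: "poly (rc h) \<xi> = 0" for h
  proof -
    have e1: "rc (f * (h div f) + h mod f) = rc f * rc (h div f) + rc (h mod f)"
      by (simp add: hom_distribs)
    have "rc h = rc f * rc (h div f) + rc (h mod f)"
      using e1 by (simp only: mult_div_mod_eq)
    hence "poly (rc h) \<xi> = poly (rc f) \<xi> * poly (rc (h div f)) \<xi> + poly (rc (h mod f)) \<xi>"
      by simp
    hence z: "poly (rc (h mod f)) \<xi> = 0" using h rf by simp
    have "h mod f = 0"
    proof (rule ccontr)
      assume nz: "h mod f \<noteq> 0"
      hence "degree (h mod f) < degree f" using fnz degree_mod_less by blast
      moreover have "n \<le> degree (h mod f)" using min[OF nz z] .
      ultimately show False using df by simp
    qed
    thus ?thesis by (simp add: mod_eq_0_iff_dvd)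
  qed
  thus ?thesis using lf rf by blast
qed

lemma minpoly_int:
  fixes P :: "int poly" and f :: "rat poly"
  assumes P: "lead_coeff P = 1" and f: "lead_coeff f = 1" and d: "f dvd map_poly of_int P"
  shows "\<exists>F G. map_poly of_int F = f \<and> P = F * G \<and> lead_coeff F = 1"
proof -
  from d obtain g where g: "map_poly of_int P = f * g" by (auto elim: dvdE)
  obtain r rg where rr: "rat_to_normalized_int_poly f = (r, rg)" by force
  from rat_to_int_factor_explicit[OF g rr] obtain r' where P': "P = rg * smult (content P) r'" by auto
  from rat_to_normalized_int_poly[OF rr] have fr: "f = smult r (map_poly of_int rg)" and r: "r > 0" by auto
  have "lead_coeff rg * lead_coeff (smult (content P) r') = 1"
    using P P' by (metis lead_coeff_mult)
  hence u: "lead_coeff rg dvd 1" by (metis dvd_triv_left)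
  have "r * of_int (lead_coeff rg) = 1" using f fr r by simp
  with r have "rat_of_int (lead_coeff rg) = 1 / r"
    by (simp add: field_simps)
  with r have "rat_of_int (lead_coeff rg) > 0" by simp
  hence pos: "lead_coeff rg > 0" by simp
  with u have l1: "lead_coeff rg = 1" by (simp add: zdvd1_eq)
  with \<open>r * of_int (lead_coeff rg) = 1\<close> have "r = 1" by simp
  with fr have "f = map_poly of_int rg" by simp
  thus ?thesis using P' l1 by blast
qed

lemma binom_prime:
  fixes a b :: "'a :: comm_ring_1"
  assumes q: "prime q"
  shows "\<exists>C. (a + b) ^ q = a ^ q + b ^ q + of_nat q * C"
proof -
  have q1: "q > 1" using q prime_gt_1_nat by blast
  define C where "C = (\<Sum>k\<in>{1..<q}. of_nat ((q choose k) div q) * a ^ k * b ^ (q - k))"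
  have "(a + b) ^ q = (\<Sum>k\<le>q. of_nat (q choose k) * a ^ k * b ^ (q - k))"
    by (rule binomial_ring)
  also have "{..q} = insert 0 (insert q {1..<q})" using q1 by auto
  also have "(\<Sum>k\<in>insert 0 (insert q {1..<q}). of_nat (q choose k) * a ^ k * b ^ (q - k)) =
     b ^ q + (a ^ q + (\<Sum>k\<in>{1..<q}. of_nat (q choose k) * a ^ k * b ^ (q - k)))"
    using q1 by (simp add: sum.insert)
  also have "(\<Sum>k\<in>{1..<q}. of_nat (q choose k) * a ^ k * b ^ (q - k)) = of_nat q * C"
    unfolding C_def sum_distrib_left
  proof (rule sum.cong[OF refl])
    fix k assume k: "k \<in> {1..<q}"
    have "q dvd (q choose k)" using k q by (intro dvd_choose_prime) auto
    hence "q choose k = q * ((q choose k) div q)" by simp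
    hence "(of_nat (q choose k) :: 'a) = of_nat q * of_nat ((q choose k) div q)"
      by (metis of_nat_mult)
    thus "of_nat (q choose k) * a ^ k * b ^ (q - k) =
          of_nat q * (of_nat ((q choose k) div q) * a ^ k * b ^ (q - k))"
      by (simp add: mult.assoc)
  qed
  finally show ?thesis by (auto simp: algebra_simps)
qed

lemma fermat_nat_aux:
  assumes q: "prime q"
  shows "\<exists>s. (int n) ^ q = int n + int q * s"
proof (induction n)
  case 0
  then show ?case using q by (intro exI[of _ 0]) (simp add: prime_gt_0_nat)
next
  case (Suc n)
  then obtain s where s: "(int n) ^ q = int n + int q * s" by blast
  obtain C where C: "(int n + 1) ^ q = int n ^ q + 1 ^ q + of_nat q * C"
    using binom_prime[OF q] by blast
  have e: "int (Suc n) = int n + 1" by simp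
  have "int (Suc n) ^ q = int n ^ q + 1 ^ q + of_nat q * C" unfolding e by (rule C)
  also have "\<dots> = int (Suc n) + int q * (s + C)" using s by (simp add: algebra_simps)
  finally show ?case by blast
qed

lemma fermat_int:
  assumes q: "prime q"
  shows "\<exists>s. (a::int) ^ q = a + int q * s"
proof (cases "a \<ge> 0")
  case True
  then show ?thesis using fermat_nat_aux[OF q, of "nat a"] by simp
next
  case False
  define b where "b = nat (- a)"
  have ab: "a = - int b" using False by (simp add: b_def)
  obtain s where s: "(int b) ^ q = int b + int q * s" using fermat_nat_aux[OF q] by blast
  show ?thesis
  proof (cases "q = 2")
    case True
    have "a ^ q = int b ^ q" using True ab by simp
    also have "\<dots> = a + int q * (int b + s)" using s True ab by (simp add: algebra_simps)
    finally show ?thesis by blast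
  next
    case False
    hence "odd q" using q prime_odd_nat prime_ge_2_nat by (metis le_neq_implies_less)
    have "a ^ q = - (int b ^ q)" using \<open>odd q\<close> by (simp add: ab)
    also have "\<dots> = a + int q * (- s)" using s ab by simp
    finally show ?thesis by blast
  qed
qed

lemma frob:
  fixes F :: "int poly"
  assumes q: "prime q"
  shows "\<exists>R. F ^ q = F \<circ>\<^sub>p monom 1 q + of_nat q * R"
proof (induction F)
  case 0
  then show ?case using q by (intro exI[of _ 0]) (simp add: prime_gt_0_nat)
next
  case (pCons a P)
  then obtain R where R: "P ^ q = P \<circ>\<^sub>p monom 1 q + of_nat q * R" by blast
  obtain s where s: "a ^ q = a + int q * s" using fermat_int[OF q] by blast
  have split: "pCons a P = [:a:] + [:0,1:] * P"
    by simp
  obtain C where C: "([:a:] + [:0,1:] * P) ^ q = [:a:] ^ q + ([:0,1:] * P) ^ q + of_nat q * C"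
    using binom_prime[OF q] by blast
  have a1: "[:a:] ^ q = [:a:] + of_nat q * [:s:]"
    by (simp add: s of_nat_poly poly_const_pow)
  have a2: "([:0,1:] * P) ^ q = monom 1 q * (P \<circ>\<^sub>p monom 1 q) + of_nat q * (monom 1 q * R)"
  proof -
    have xq: "[:0,1:] ^ q = (monom 1 q :: int poly)" by (simp add: monom_altdef)
    have "([:0,1:] * P) ^ q = monom 1 q * P ^ q"
      unfolding power_mult_distrib xq ..
    also have "\<dots> = monom 1 q * (P \<circ>\<^sub>p monom 1 q) + of_nat q * (monom 1 q * R)"
      unfolding R by (simp only: distrib_left mult.left_commute)
    finally show ?thesis .
  qed
  have a3: "pCons a P \<circ>\<^sub>p monom 1 q = [:a:] + monom 1 q * (P \<circ>\<^sub>p monom 1 q)"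
    by (simp add: pcompose_pCons)
  have "pCons a P ^ q = [:a:] + of_nat q * [:s:] + (monom 1 q * (P \<circ>\<^sub>p monom 1 q) + of_nat q * (monom 1 q * R)) + of_nat q * C"
    unfolding split C a1 a2 by (rule refl)
  also have "\<dots> = pCons a P \<circ>\<^sub>p monom 1 q + of_nat q * ([:s:] + monom 1 q * R + C)"
    unfolding a3 by (simp only: distrib_left add.assoc add.left_commute)
  finally show ?case by blast
qed

definition prim :: "complex \<Rightarrow> nat \<Rightarrow> bool" where
  "prim \<xi> N \<longleftrightarrow> N > 0 \<and> (\<forall>t. \<xi> ^ t = 1 \<longleftrightarrow> N dvd t)"

lemma rc_ir: "rc (map_poly of_int P) = (map_poly of_int P :: complex poly)"
  by (simp add: map_poly_map_poly o_def)

lemma conj_prime: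
  assumes pr: "prim \<xi> N" and q: "prime q" "\<not> q dvd N"
    and h: "poly (rc h) \<xi> = 0"
  shows "poly (rc h) (\<xi> ^ q) = 0"
proof -
  from pr have N0: "N > 0" and ord: "\<And>t. \<xi> ^ t = 1 \<longleftrightarrow> N dvd t" by (auto simp: prim_def)
  define P :: "int poly" where "P = monom 1 N - 1"
  have lP: "lead_coeff P = 1"
  proof -
    have c: "coeff P N = 1" using N0 by (simp add: P_def coeff_monom)
    have "degree P \<le> N" unfolding P_def
      by (rule degree_diff_le) (auto simp: degree_monom_le)
    moreover have "N \<le> degree P" using c by (intro le_degree) simp
    ultimately have "degree P = N" by simp
    thus ?thesis using c by simp
  qed
  have evP: "poly (of_int_poly P) x = x ^ N - 1" for x :: complex
    by (simp add: P_def hom_distribs poly_monom)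
  have P0: "P \<noteq> 0" using lP by auto
  have "poly (rc (map_poly of_int P)) \<xi> = 0" unfolding rc_ir evP using ord[of N] by simp
  moreover have "(map_poly of_int P :: rat poly) \<noteq> 0" using P0 by simp
  ultimately obtain f where lf: "lead_coeff f = 1" and rf: "poly (rc f) \<xi> = 0"
      and fdvd: "\<And>h. poly (rc h) \<xi> = 0 \<Longrightarrow> f dvd h"
    using minpoly_ex by blast
  have "f dvd map_poly of_int P" by (rule fdvd) fact
  from minpoly_int[OF lP lf this] obtain F G where FG: "map_poly of_int F = f" "P = F * G" "lead_coeff F = 1"
    by blast
  have rcf: "rc f = of_int_poly F" using FG(1) rc_ir by metis
  have EF: "poly (of_int_poly F) \<xi> = 0" using rf rcf by simp
  obtain R where R: "F ^ q = F \<circ>\<^sub>p monom 1 q + of_nat q * R" using frob[OF q(1)] by blast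
  have e0: "poly (of_int_poly (F ^ q)) \<xi> = poly (of_int_poly (F \<circ>\<^sub>p monom 1 q + of_nat q * R)) \<xi>"
    unfolding R ..
  have e1: "poly (of_int_poly (F ^ q)) \<xi> = 0"
    using EF q(1) by (simp add: of_int_poly_hom.hom_power prime_gt_0_nat)
  have e2: "poly (of_int_poly (F \<circ>\<^sub>p monom 1 q)) \<xi> = poly (of_int_poly F) (\<xi> ^ q)"
    by (simp add: of_int_hom.map_poly_pcompose poly_pcompose poly_monom)
  have e3: "poly (of_int_poly (of_nat q * R)) \<xi> = of_nat q * poly (of_int_poly R) \<xi>"
    by (simp add: of_nat_poly of_int_hom.map_poly_hom_smult)
  have FY: "poly (of_int_poly F) (\<xi> ^ q) = - of_nat q * poly (of_int_poly R) \<xi>"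
    using e0 e1 e2 e3 by (simp add: of_int_poly_hom.hom_add eq_neg_iff_add_eq_0)
  show ?thesis
  proof (rule ccontr)
    assume nz: "poly (rc h) (\<xi> ^ q) \<noteq> 0"
    define y where "y = \<xi> ^ q"
    from fdvd[OF h] obtain k where "h = f * k" by (auto elim: dvdE)
    hence "rc h = of_int_poly F * rc k" using rcf by (simp add: hom_distribs)
    hence Fy: "poly (of_int_poly F) y \<noteq> 0" using nz by (simp add: y_def)
    have yN: "y ^ N = 1" unfolding y_def power_mult[symmetric] using ord[of "q * N"] by simp
    have "poly (of_int_poly P) y = poly (of_int_poly F) y * poly (of_int_poly G) y"
      using FG(2) by (simp add: hom_distribs)
    hence Gy: "poly (of_int_poly G) y = 0" using Fy yN evP by simp
    have "pderiv P = F * pderiv G + G * pderiv F" using FG(2) pderiv_mult by metis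
    hence "poly (of_int_poly (pderiv P)) y = poly (of_int_poly F) y * poly (of_int_poly (pderiv G)) y"
      using Gy by (simp add: hom_distribs)
    moreover have "poly (of_int_poly (pderiv P)) y = of_nat N * y ^ (N - 1)"
      by (simp add: P_def pderiv_monom pderiv_diff hom_distribs poly_monom)
    ultimately have e1: "of_nat N * y ^ (N - 1) = poly (of_int_poly F) y * poly (of_int_poly (pderiv G)) y"
      by simp
    have "y ^ (N - 1) * y = 1" using power_minus_mult[OF N0, of y] yN by simp
    hence "(of_nat N :: complex) = of_nat N * y ^ (N - 1) * y"
      by (simp add: mult.assoc)
    also have "\<dots> = of_nat q * (- poly (of_int_poly R) \<xi> * poly (of_int_poly (pderiv G)) y * y)"
      unfolding e1 using FY by (simp add: y_def)
    finally have eN: "(of_nat N :: complex) = of_nat q * (- poly (of_int_poly R) \<xi> * poly (of_int_poly (pderiv G)) y * y)" .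
    define Z where "Z = - (R * (pderiv G \<circ>\<^sub>p monom 1 q) * monom 1 q)"
    have EZ: "poly (of_int_poly Z) \<xi> = - poly (of_int_poly R) \<xi> * poly (of_int_poly (pderiv G)) y * y"
      by (simp add: Z_def hom_distribs poly_pcompose poly_monom y_def)
    obtain Qd Rm where pd: "pseudo_divmod Z F = (Qd, Rm)" by force
    have F0: "F \<noteq> 0" using FG(3) by auto
    from pseudo_divmod[OF F0 pd] FG(3) have ZF: "Z = F * Qd + Rm" and Rm: "Rm = 0 \<or> degree Rm < degree F"
      by auto
    have EZ2: "poly (of_int_poly Z) \<xi> = poly (of_int_poly Rm) \<xi>"
      using EF by (simp add: ZF hom_distribs)
    have dF: "degree F \<ge> 1"
    proof (rule ccontr)
      assume "\<not> degree F \<ge> 1"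
      hence "degree F = 0" by simp
      hence "F = [:coeff F 0:]" using degree_0_id by metis
      also have "coeff F 0 = 1" using FG(3) \<open>degree F = 0\<close> by simp
      finally have "F = [:1:]" .
      thus False using EF by simp
    qed
    have dRm: "degree Rm < degree F" using Rm dF by auto
    define h' :: "rat poly" where "h' = smult (of_nat q) (map_poly of_int Rm) - [:of_nat N:]"
    have "poly (rc h') \<xi> = of_nat q * poly (of_int_poly Rm) \<xi> - of_nat N"
      by (simp add: h'_def hom_distribs rc_ir)
    also have "\<dots> = 0" using eN EZ EZ2 by simp
    finally have "f dvd h'" by (rule fdvd)
    have dh: "degree h' < degree f"
    proof -
      have "degree h' \<le> max (degree (smult (of_nat q) (map_poly of_int Rm :: rat poly))) (degree [:(of_nat N :: rat):])"
        unfolding h'_def by (rule degree_diff_le_max)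
      also have "\<dots> \<le> degree Rm" by simp
      also have "\<dots> < degree F" by (rule dRm)
      also have "degree F = degree f" using FG(1) by auto
      finally show ?thesis .
    qed
    have "h' = 0"
    proof (rule ccontr)
      assume "h' \<noteq> 0"
      with \<open>f dvd h'\<close> have "degree f \<le> degree h'" by (rule dvd_imp_degree_le)
      with dh show False by simp
    qed
    hence "coeff h' 0 = 0" by simp
    hence "rat_of_nat q * rat_of_int (coeff Rm 0) = rat_of_nat N" by (simp add: h'_def)
    hence "rat_of_int (int q * coeff Rm 0) = rat_of_int (int N)" by simp
    hence "int q * coeff Rm 0 = int N" by (simp only: of_int_eq_iff)
    hence "int q dvd int N" by (metis dvd_triv_left)
    thus False using q(2) by simp
  qed
qed

lemma prim_pow:
  assumes "prim \<xi> N" "gcd u N = 1"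
  shows "prim (\<xi> ^ u) N"
proof -
  have g: "gcd N u = 1" using assms(2) by (simp add: gcd.commute)
  note c = coprime_dvd_mult_right_iff[OF coprime_iff_gcd_eq_1[THEN iffD2, OF g]]
  have "(\<xi> ^ u) ^ t = 1 \<longleftrightarrow> N dvd t" for t
  proof -
    have "(\<xi> ^ u) ^ t = \<xi> ^ (u * t)" by (simp add: power_mult)
    also have "\<dots> = 1 \<longleftrightarrow> N dvd u * t" using assms(1) by (simp add: prim_def)
    also have "\<dots> \<longleftrightarrow> N dvd t" by (rule c)
    finally show ?thesis .
  qed
  thus ?thesis using assms(1) by (simp add: prim_def)
qed

lemma conj_gen:
  assumes "prim \<xi> N" "gcd u N = 1" "poly (rc h) \<xi> = 0"
  shows "poly (rc h) (\<xi> ^ u) = 0"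
  using assms
proof (induction u arbitrary: \<xi> rule: less_induct)
  case (less u)
  show ?case
  proof (cases "u \<le> 1")
    case True
    show ?thesis
    proof (cases "u = 0")
      case True
      with less.prems(2) have "N = 1" by simp
      with less.prems(1) have "\<forall>t. \<xi> ^ t = 1" by (simp add: prim_def)
      hence "\<xi> = 1" by (metis power_one_right)
      thus ?thesis using less.prems(3) True by simp
    next
      case False
      with \<open>u \<le> 1\<close> have "u = 1" by simp
      thus ?thesis using less.prems(3) by simp
    qed
  next
    case False
    then obtain q where q: "prime q" "q dvd u" using prime_factor_nat[of u] by auto
    then obtain u' where u': "u = q * u'" by (auto elim: dvdE)
    have "q > 1" using q(1) prime_gt_1_nat by blast
    moreover have "u' > 0" using u' False by (cases u') auto
    ultimately have lt: "u' < u" using u' by simp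
    from less.prems(2) u' have g: "gcd (q * u') N = 1" by simp
    note c = coprime_iff_gcd_eq_1[THEN iffD2, OF g]
    have cq: "gcd q N = 1" and cu': "gcd u' N = 1"
      using c by (simp_all add: coprime_iff_gcd_eq_1[symmetric])
    have nq: "\<not> q dvd N"
    proof
      assume "q dvd N"
      hence "q dvd gcd q N" by simp
      with cq have "q dvd 1" by simp
      with q(1) show False by simp
    qed
    have h1: "poly (rc h) (\<xi> ^ q) = 0" by (rule conj_prime[OF less.prems(1) q(1) nq less.prems(3)])
    have p1: "prim (\<xi> ^ q) N" by (rule prim_pow[OF less.prems(1) cq])
    have "poly (rc h) ((\<xi> ^ q) ^ u') = 0" by (rule less.IH[OF lt p1 cu' h1])
    thus ?thesis by (simp add: u' power_mult)
  qed
qed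

lemma conj_sum:
  assumes pr: "prim \<xi> N" and cu: "gcd u N = 1" and fin: "finite T"
    and rat: "\<forall>i\<in>T. c i \<in> \<rat>" and s0: "(\<Sum>i\<in>T. c i * \<xi> ^ (e i)) = 0"
  shows "(\<Sum>i\<in>T. c i * \<xi> ^ (e i * u)) = 0"
proof -
  define r where "r i = (SOME x. c i = of_rat x)" for i
  have r: "c i = of_rat (r i)" if "i \<in> T" for i
  proof -
    have "\<exists>x. c i = of_rat x" using rat that by (auto elim: Rats_cases)
    thus ?thesis unfolding r_def by (rule someI_ex)
  qed
  define h where "h = (\<Sum>i\<in>T. monom (r i) (e i))"
  have ev: "poly (rc h) x = (\<Sum>i\<in>T. c i * x ^ (e i))" for x
    unfolding h_def of_rat_poly_hom.hom_sum poly_sum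
    by (rule sum.cong) (simp_all add: poly_monom r)
  have "poly (rc h) (\<xi> ^ u) = 0" by (rule conj_gen[OF pr cu]) (simp add: ev s0)
  thus ?thesis by (simp add: ev power_mult mult.commute)
qed


lemma avg:
  assumes pr: "prim \<xi> N" and p: "prime p" "p dvd N" and fin: "finite T"
  shows "(\<Sum>v<p. \<Sum>i\<in>T. c i * \<xi> ^ (e i * (1 + N div p * v))) =
         of_nat p * (\<Sum>i\<in>{i\<in>T. p dvd e i}. c i * \<xi> ^ e i)"
proof -
  define M where "M = N div p"
  have N: "N = p * M" using p(2) by (simp add: M_def)
  have N0: "N > 0" using pr by (simp add: prim_def)
  have M0: "M > 0" using N N0 by (cases M) auto
  have inner: "(\<Sum>v<p. (\<xi> ^ (M * e i)) ^ v) = (if p dvd e i then of_nat p else 0)" for i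
  proof -
    have "\<xi> ^ (M * e i) = 1 \<longleftrightarrow> N dvd M * e i" using pr by (simp add: prim_def)
    also have "\<dots> \<longleftrightarrow> M * p dvd M * e i" by (simp add: N mult.commute)
    also have "\<dots> \<longleftrightarrow> p dvd e i" using M0 by simp
    finally have z1: "\<xi> ^ (M * e i) = 1 \<longleftrightarrow> p dvd e i" .
    have "(\<xi> ^ (M * e i)) ^ p = \<xi> ^ (N * e i)" by (simp add: N power_mult[symmetric] mult_ac)
    also have "\<dots> = 1" using pr by (simp add: prim_def)
    finally have zp: "(\<xi> ^ (M * e i)) ^ p = 1" .
    show ?thesis
    proof (cases "p dvd e i")
      case True thus ?thesis using z1 by simp
    next
      case False thus ?thesis using z1 zp by (simp add: sum_gp_strict)
    qed
  qed
  have pt: "\<xi> ^ (e i * (1 + M * v)) = \<xi> ^ e i * (\<xi> ^ (M * e i)) ^ v" for i v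
  proof -
    have "e i * (1 + M * v) = e i + (M * e i) * v" by (simp add: algebra_simps)
    thus ?thesis by (simp only: power_add power_mult)
  qed
  have "(\<Sum>v<p. \<Sum>i\<in>T. c i * \<xi> ^ (e i * (1 + M * v))) =
        (\<Sum>i\<in>T. \<Sum>v<p. c i * \<xi> ^ e i * (\<xi> ^ (M * e i)) ^ v)"
    by (subst sum.swap) (intro sum.cong refl, simp only: pt mult.assoc)
  also have "\<dots> = (\<Sum>i\<in>T. c i * \<xi> ^ e i * (\<Sum>v<p. (\<xi> ^ (M * e i)) ^ v))"
    by (simp add: sum_distrib_left)
  also have "\<dots> = (\<Sum>i\<in>T. if p dvd e i then of_nat p * (c i * \<xi> ^ e i) else 0)"
    by (rule sum.cong) (simp_all add: inner)
  also have "\<dots> = (\<Sum>i\<in>{i\<in>T. p dvd e i}. of_nat p * (c i * \<xi> ^ e i))"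
    using fin by (simp add: sum.inter_filter)
  also have "\<dots> = of_nat p * (\<Sum>i\<in>{i\<in>T. p dvd e i}. c i * \<xi> ^ e i)"
    by (simp add: sum_distrib_left)
  finally show ?thesis by (simp add: M_def)
qed

lemma class_iff:
  fixes p N s t :: nat
  assumes "p dvd N" "s < p" "s \<le> N"
  shows "p dvd t + (N - s) \<longleftrightarrow> t mod p = s"
proof -
  have e: "int (t + (N - s)) = (int t - int s) + int N" using assms(3) by simp
  have "p dvd t + (N - s) \<longleftrightarrow> int p dvd int (t + (N - s))" by (simp only: int_dvd_int_iff)
  also have "\<dots> \<longleftrightarrow> int p dvd (int t - int s)"
    unfolding e using assms(1) by (simp add: dvd_add_left_iff)
  also have "\<dots> \<longleftrightarrow> int t mod int p = int s mod int p" by (simp add: mod_eq_dvd_iff)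
  also have "int s mod int p = int s" using assms(2) by simp
  also have "int t mod int p = int (t mod p)" by (simp add: zmod_int)
  finally show ?thesis by simp
qed

lemma mann_prime:
  fixes T :: "nat set" and c :: "nat \<Rightarrow> complex" and t :: "nat \<Rightarrow> nat"
  assumes pr: "prim \<xi> N" and fin: "finite T" and j0: "j0 \<in> T" and t0: "N dvd t j0"
    and rat: "\<forall>i\<in>T. c i \<in> \<rat>" and s0: "(\<Sum>i\<in>T. c i * \<xi> ^ t i) = 0"
    and minl: "\<forall>S. S \<noteq> {} \<and> S \<subset> T \<longrightarrow> (\<Sum>i\<in>S. c i * \<xi> ^ t i) \<noteq> 0"
    and p: "prime p" "p dvd N"
    and Nmin: "\<not> (\<forall>i\<in>T. \<xi> ^ (t i * (N div p)) = 1)"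
  shows "\<not> p^2 dvd N \<and> p \<le> card T"
proof -
  define M where "M = N div p"
  have N: "N = p * M" using p(2) by (simp add: M_def)
  have p1: "p > 1" using p(1) prime_gt_1_nat by blast
  have N0: "N > 0" using pr by (simp add: prim_def)
  have M0: "M > 0" using N N0 by (cases M) auto
  have ord: "\<And>x. \<xi> ^ x = 1 \<longleftrightarrow> N dvd x" using pr by (simp add: prim_def)
  have xi0: "\<xi> \<noteq> 0" using ord[of N] N0 by (auto simp: zero_power)
  have C0: "(\<Sum>i\<in>{i\<in>T. p dvd t i}. c i * \<xi> ^ t i) \<noteq> 0"
  proof
    assume z: "(\<Sum>i\<in>{i\<in>T. p dvd t i}. c i * \<xi> ^ t i) = 0"
    let ?S = "{i\<in>T. p dvd t i}"
    have "j0 \<in> ?S" using j0 t0 p(2) dvd_trans by blast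
    hence "?S \<noteq> {}" by blast
    hence ne: "?S \<noteq> {}" .
    have sub: "?S \<subseteq> T" by blast
    have ST: "?S = T"
    proof (rule ccontr)
      assume "?S \<noteq> T"
      hence "?S \<subset> T" using sub by (simp add: psubset_eq)
      thus False using minl[rule_format, of ?S] ne z by simp
    qed
    have "\<forall>i\<in>T. \<xi> ^ (t i * M) = 1"
    proof
      fix i assume "i \<in> T"
      hence "p dvd t i" using ST by blast
      then obtain a where "t i = p * a" by (auto elim: dvdE)
      hence "t i * M = N * a" by (simp add: N)
      thus "\<xi> ^ (t i * M) = 1" using ord by simp
    qed
    thus False using Nmin by (simp add: M_def)
  qed
  have avgM: "(\<Sum>v<p. \<Sum>i\<in>T. c i * \<xi> ^ (e i * (1 + M * v))) = of_nat p * (\<Sum>i\<in>{i\<in>T. p dvd e i}. c i * \<xi> ^ e i)" for e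
    using avg[OF pr p fin, of c e] by (simp add: M_def)
  have "\<exists>v0<p. gcd (1 + M * v0) N \<noteq> 1"
  proof (rule ccontr)
    assume "\<not> ?thesis"
    hence allc: "gcd (1 + M * v) N = 1" if "v < p" for v using that by auto
    have "(\<Sum>v<p. \<Sum>i\<in>T. c i * \<xi> ^ (t i * (1 + M * v))) = 0"
    proof (rule sum.neutral, rule ballI)
      fix v assume "v \<in> {..<p}"
      thus "(\<Sum>i\<in>T. c i * \<xi> ^ (t i * (1 + M * v))) = 0"
        using conj_sum[OF pr allc fin rat s0] by simp
    qed
    hence "of_nat p * (\<Sum>i\<in>{i\<in>T. p dvd t i}. c i * \<xi> ^ t i) = 0" using avgM[of t] by simp
    thus False using C0 p1 by simp
  qed
  then obtain v0 where v0: "v0 < p" "gcd (1 + M * v0) N \<noteq> 1" by blast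
  have pdiv: "p dvd 1 + M * v \<and> \<not> p dvd M" if g: "gcd (1 + M * v) N \<noteq> 1" for v
  proof -
    obtain r where r: "prime r" "r dvd gcd (1 + M * v) N" using prime_factor_nat[OF g] by blast
    hence r1: "r dvd 1 + M * v" and r2: "r dvd p * M" using N by auto
    have nrM: "\<not> r dvd M"
    proof
      assume "r dvd M"
      hence "r dvd M * v" by simp
      with r1 have "r dvd (1 + M * v) - M * v" by (rule dvd_diff_nat)
      hence "r dvd 1" by simp
      thus False using r(1) by simp
    qed
    hence "r dvd p" using r2 r(1) by (simp add: prime_dvd_mult_iff)
    hence "r = p" using r(1) p(1) by (simp add: primes_dvd_imp_eq)
    thus ?thesis using r1 nrM by simp
  qed
  from pdiv[OF v0(2)] have pv0: "p dvd 1 + M * v0" and pM: "\<not> p dvd M" by auto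
  have sq: "\<not> p^2 dvd N"
  proof
    assume "p^2 dvd N"
    hence "p * p dvd p * M" by (simp add: N power2_eq_square)
    hence "p dvd M" using p1 by simp
    with pM show False by simp
  qed
  have aux: False if ab: "a < b" "b < p" "p dvd 1 + M * a" "p dvd 1 + M * b" for a b
  proof -
    obtain d where d: "b = a + d" "d > 0" using ab(1) less_imp_add_positive by blast
    have e: "1 + M * b = (1 + M * a) + M * d" by (simp add: d algebra_simps)
    have "p dvd (1 + M * b) - (1 + M * a)" using ab(4) ab(3) by (rule dvd_diff_nat)
    hence "p dvd M * d" unfolding e by simp
    hence "p dvd d" using pM p(1) by (simp add: prime_dvd_mult_iff)
    hence "p \<le> d" using d(2) by (simp add: dvd_imp_le)
    thus False using d ab by simp
  qed
  have others: "gcd (1 + M * v) N = 1" if "v < p" "v \<noteq> v0" for v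
  proof (rule ccontr)
    assume "gcd (1 + M * v) N \<noteq> 1"
    from pdiv[OF this] have pv: "p dvd 1 + M * v" by simp
    show False
    proof (cases "v < v0")
      case True show False by (rule aux[OF True v0(1) pv pv0])
    next
      case False
      hence "v0 < v" using that(2) by simp
      thus False using aux[OF _ that(1) pv0 pv] by simp
    qed
  qed
  define u0 where "u0 = 1 + M * v0"
  define \<gamma> where "\<gamma> = (\<Sum>i\<in>T. c i * \<xi> ^ (t i * u0))"
  have shift: "of_nat p * (\<Sum>i\<in>{i\<in>T. p dvd t i + (N - s)}. c i * \<xi> ^ (t i + (N - s))) = \<xi> ^ ((N - s) * u0) * \<gamma>" for s
  proof -
    define e where "e i = t i + (N - s)" for i
    have se: "(\<Sum>i\<in>T. c i * \<xi> ^ e i) = 0"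
    proof -
      have "(\<Sum>i\<in>T. c i * \<xi> ^ e i) = \<xi> ^ (N - s) * (\<Sum>i\<in>T. c i * \<xi> ^ t i)"
        unfolding sum_distrib_left by (rule sum.cong) (simp_all only: e_def power_add mult_ac)
      thus ?thesis using s0 by simp
    qed
    have z: "(\<Sum>i\<in>T. c i * \<xi> ^ (e i * (1 + M * v))) = 0" if "v \<in> {..<p} - {v0}" for v
      using conj_sum[OF pr others[of v] fin rat se] that by auto
    have "(\<Sum>v<p. \<Sum>i\<in>T. c i * \<xi> ^ (e i * (1 + M * v))) =
          (\<Sum>i\<in>T. c i * \<xi> ^ (e i * (1 + M * v0))) + (\<Sum>v\<in>{..<p} - {v0}. \<Sum>i\<in>T. c i * \<xi> ^ (e i * (1 + M * v)))"
      using v0(1) by (subst sum.remove[of _ v0]) auto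
    also have "(\<Sum>v\<in>{..<p} - {v0}. \<Sum>i\<in>T. c i * \<xi> ^ (e i * (1 + M * v))) = 0"
      using z by (intro sum.neutral) blast
    also have "(\<Sum>i\<in>T. c i * \<xi> ^ (e i * (1 + M * v0))) = \<xi> ^ ((N - s) * u0) * \<gamma>"
      unfolding \<gamma>_def sum_distrib_left u0_def[symmetric]
    proof (rule sum.cong[OF refl])
      fix i
      have "e i * u0 = t i * u0 + (N - s) * u0" unfolding e_def by (rule add_mult_distrib)
      thus "c i * \<xi> ^ (e i * u0) = \<xi> ^ ((N - s) * u0) * (c i * \<xi> ^ (t i * u0))"
        by (simp only: power_add mult_ac)
    qed
    finally show ?thesis using avgM[of e] by (simp add: e_def)
  qed
  have pN: "p \<le> N" using p(2) N0 by (simp add: dvd_imp_le)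
  have allcls: "\<exists>i\<in>T. t i mod p = s" if sp: "s < p" for s
  proof (rule ccontr)
    assume ne: "\<not> ?thesis"
    have sN: "s \<le> N" using sp pN by simp
    have E: "{i\<in>T. p dvd t i + (N - s)} = {}" using ne class_iff[OF p(2) sp sN] by auto
    have "\<xi> ^ ((N - s) * u0) * \<gamma> = 0" unfolding shift[of s, symmetric] E by simp
    hence g0: "\<gamma> = 0" using xi0 by simp
    have "of_nat p * (\<Sum>i\<in>{i\<in>T. p dvd t i + (N - 0)}. c i * \<xi> ^ (t i + (N - 0))) = 0"
      using shift[of 0] g0 by simp
    moreover have "{i\<in>T. p dvd t i + (N - 0)} = {i\<in>T. p dvd t i}"
      using p(2) by (auto simp: dvd_add_left_iff)
    moreover have "\<xi> ^ (t i + (N - 0)) = \<xi> ^ t i" for i using ord[of N] by (simp add: power_add)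
    ultimately have "(\<Sum>i\<in>{i\<in>T. p dvd t i}. c i * \<xi> ^ t i) = 0" using p1 by simp
    thus False using C0 by simp
  qed
  have "{..<p} \<subseteq> (\<lambda>i. t i mod p) ` T" using allcls by auto
  hence "card {..<p} \<le> card ((\<lambda>i. t i mod p) ` T)" by (intro card_mono) (simp_all add: fin)
  also have "\<dots> \<le> card T" using fin by (rule card_image_le)
  finally have "p \<le> card T" by simp
  thus ?thesis using sq by simp
qed


lemma sqfree_dvd_prod:
  fixes N :: nat
  assumes "N > 0" "finite P" "\<forall>p. prime p \<and> p dvd N \<longrightarrow> p \<in> P \<and> \<not> p^2 dvd N"
  shows "N dvd \<Prod>P"
  using assms
proof (induction N arbitrary: P rule: less_induct)
  case (less N)
  show ?case
  proof (cases "N = 1")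
    case True thus ?thesis by simp
  next
    case False
    then obtain p where p: "prime p" "p dvd N" using prime_factor_nat[OF False] by blast
    then obtain N' where N': "N = p * N'" by (auto elim: dvdE)
    have pP: "p \<in> P" and sq: "\<not> p^2 dvd N" using less.prems(3) p by auto
    have N'0: "N' > 0" using N' less.prems(1) by (cases N') auto
    have p1: "p > 1" using p(1) prime_gt_1_nat by blast
    have lt: "N' < N" using N' N'0 p1 by simp
    have npN': "\<not> p dvd N'"
    proof
      assume "p dvd N'"
      hence "p * p dvd p * N'" by (rule mult_dvd_mono[OF dvd_refl])
      hence "p^2 dvd N" using N' by (simp add: power2_eq_square)
      with sq show False by simp
    qed
    have N'N: "N' dvd N" using N' by simp
    have "N' dvd \<Prod>(P - {p})"
    proof (rule less.IH[OF lt N'0])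
      show "finite (P - {p})" using less.prems(2) by simp
      show "\<forall>r. prime r \<and> r dvd N' \<longrightarrow> r \<in> P - {p} \<and> \<not> r^2 dvd N'"
      proof (intro allI impI)
        fix r assume r: "prime r \<and> r dvd N'"
        hence rN: "r dvd N" using N'N dvd_trans by blast
        hence rP: "r \<in> P" and rsq: "\<not> r^2 dvd N" using less.prems(3) r by auto
        have "r \<noteq> p" using r npN' by auto
        moreover have "\<not> r^2 dvd N'" using rsq N'N dvd_trans by blast
        ultimately show "r \<in> P - {p} \<and> \<not> r^2 dvd N'" using rP by simp
      qed
    qed
    hence "p * N' dvd p * \<Prod>(P - {p})" by (rule mult_dvd_mono[OF dvd_refl])
    also have "p * \<Prod>(P - {p}) = \<Prod>P" using pP less.prems(2) by (simp add: prod.remove)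
    finally show ?thesis using N' by simp
  qed
qed

lemma mann:
  fixes T :: "nat set" and c w :: "nat \<Rightarrow> complex"
  assumes fin: "finite T" and j0: "j0 \<in> T" and w0: "w j0 = 1"
    and rat: "\<forall>i\<in>T. c i \<in> \<rat>" and ru: "\<forall>i\<in>T. \<exists>n>0. w i ^ n = 1"
    and s0: "(\<Sum>i\<in>T. c i * w i) = 0"
    and minl: "\<forall>S. S \<noteq> {} \<and> S \<subset> T \<longrightarrow> (\<Sum>i\<in>S. c i * w i) \<noteq> 0"
  shows "\<forall>i\<in>T. w i ^ (\<Prod>p\<in>{p. prime p \<and> p \<le> card T}. p) = 1"
proof -
  define good where "good n \<longleftrightarrow> n > 0 \<and> (\<forall>i\<in>T. w i ^ n = 1)" for n
  define ordw where "ordw i = (SOME n. n > 0 \<and> w i ^ n = 1)" for i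
  have ordw: "ordw i > 0 \<and> w i ^ ordw i = 1" if "i \<in> T" for i
    unfolding ordw_def by (rule someI_ex) (use ru that in blast)
  have gP: "good (\<Prod>i\<in>T. ordw i)"
  proof -
    have "(\<Prod>i\<in>T. ordw i) > 0" using ordw by (simp add: prod_pos)
    moreover have "w i ^ (\<Prod>i\<in>T. ordw i) = 1" if "i \<in> T" for i
    proof -
      have "ordw i dvd (\<Prod>i\<in>T. ordw i)" using fin that by (rule dvd_prodI)
      then obtain k where "(\<Prod>i\<in>T. ordw i) = ordw i * k" by (auto elim: dvdE)
      thus ?thesis using ordw[OF that] by (simp add: power_mult)
    qed
    ultimately show ?thesis by (simp add: good_def)
  qed
  define N where "N = (LEAST n. good n)"
  have gN: "good N" unfolding N_def by (rule LeastI_ex) (use gP in blast)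
  have Nle: "N \<le> n" if "good n" for n unfolding N_def by (rule Least_le) fact
  have N0: "N > 0" and wN: "\<forall>i\<in>T. w i ^ N = 1" using gN by (auto simp: good_def)
  define \<xi> where "\<xi> = cis (2 * pi / real N)"
  have bij: "bij_betw (\<lambda>k. cis (2 * pi * real k / real N)) {..<N} {z. z ^ N = 1}"
    by (rule bij_betw_roots_unity[OF N0])
  have pw: "\<xi> ^ k = cis (2 * pi * real k / real N)" for k
    by (simp add: \<xi>_def DeMoivre mult.commute)
  have xN: "\<xi> ^ N = 1" using N0 by (simp add: pw)
  have prim: "prim \<xi> N"
  proof -
    have "\<xi> ^ t = 1 \<longleftrightarrow> N dvd t" for t
    proof -
      have "\<xi> ^ t = (\<xi> ^ N) ^ (t div N) * \<xi> ^ (t mod N)"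
        by (simp add: power_mult[symmetric] power_add[symmetric])
      also have "\<dots> = \<xi> ^ (t mod N)" using xN by simp
      also have "\<dots> = 1 \<longleftrightarrow> t mod N = 0"
      proof -
        have inj: "inj_on (\<lambda>k. cis (2 * pi * real k / real N)) {..<N}" using bij by (simp add: bij_betw_def)
        have "\<xi> ^ (t mod N) = 1 \<longleftrightarrow> cis (2 * pi * real (t mod N) / real N) = cis (2 * pi * real 0 / real N)"
          by (simp add: pw)
        also have "\<dots> \<longleftrightarrow> t mod N = 0"
        proof
          assume "cis (2 * pi * real (t mod N) / real N) = cis (2 * pi * real 0 / real N)"
          from inj_onD[OF inj this] N0 show "t mod N = 0" by simp
        next
          assume "t mod N = 0" thus "cis (2 * pi * real (t mod N) / real N) = cis (2 * pi * real 0 / real N)" by simp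
        qed
        finally show ?thesis .
      qed
      finally show ?thesis by (simp add: dvd_eq_mod_eq_0)
    qed
    thus ?thesis using N0 by (simp add: prim_def)
  qed
  have ex_t: "\<exists>k<N. w i = \<xi> ^ k" if "i \<in> T" for i
  proof -
    have "w i \<in> {z. z ^ N = 1}" using wN that by simp
    hence "w i \<in> (\<lambda>k. cis (2 * pi * real k / real N)) ` {..<N}" using bij by (simp add: bij_betw_def)
    then obtain k where "k < N" "w i = cis (2 * pi * real k / real N)" by auto
    thus ?thesis by (auto simp: pw)
  qed
  define t where "t i = (SOME k. k < N \<and> w i = \<xi> ^ k)" for i
  have t: "t i < N \<and> w i = \<xi> ^ t i" if "i \<in> T" for i
    unfolding t_def by (rule someI_ex) (use ex_t[OF that] in blast)
  have sw: "(\<Sum>i\<in>S. c i * w i) = (\<Sum>i\<in>S. c i * \<xi> ^ t i)" if "S \<subseteq> T" for S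
    using that t by (intro sum.cong) auto
  have t0: "N dvd t j0" using t[OF j0] w0 prim by (simp add: prim_def)
  have s0': "(\<Sum>i\<in>T. c i * \<xi> ^ t i) = 0" using s0 sw[of T] by simp
  have minl': "\<forall>S. S \<noteq> {} \<and> S \<subset> T \<longrightarrow> (\<Sum>i\<in>S. c i * \<xi> ^ t i) \<noteq> 0"
  proof (intro allI impI)
    fix S assume S: "S \<noteq> {} \<and> S \<subset> T"
    hence "(\<Sum>i\<in>S. c i * w i) \<noteq> 0" using minl by blast
    thus "(\<Sum>i\<in>S. c i * \<xi> ^ t i) \<noteq> 0" using sw[of S] S by auto
  qed
  have pN: "\<not> p^2 dvd N \<and> p \<le> card T" if p: "prime p" "p dvd N" for p
  proof (rule mann_prime[OF prim fin j0 t0 rat s0' minl' p])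
    show "\<not> (\<forall>i\<in>T. \<xi> ^ (t i * (N div p)) = 1)"
    proof
      assume all: "\<forall>i\<in>T. \<xi> ^ (t i * (N div p)) = 1"
      have p1: "p > 1" using p(1) prime_gt_1_nat by blast
      have lt: "N div p < N" using N0 p1 by simp
      have pos: "N div p > 0" using p(2) N0 p1 by (auto elim!: dvdE)
      have "good (N div p)" unfolding good_def
      proof (intro conjI pos ballI)
        fix i assume i: "i \<in> T"
        have "w i ^ (N div p) = \<xi> ^ (t i * (N div p))" using t[OF i] by (simp add: power_mult)
        thus "w i ^ (N div p) = 1" using all i by simp
      qed
      hence "N \<le> N div p" by (rule Nle)
      with lt show False by simp
    qed
  qed
  have "N dvd (\<Prod>p\<in>{p. prime p \<and> p \<le> card T}. p)"
  proof (rule sqfree_dvd_prod[OF N0])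
    show "finite {p. prime p \<and> p \<le> card T}" by (rule finite_subset[of _ "{..card T}"]) auto
    show "\<forall>p. prime p \<and> p dvd N \<longrightarrow> p \<in> {p. prime p \<and> p \<le> card T} \<and> \<not> p^2 dvd N"
      using pN by auto
  qed
  then obtain k where "(\<Prod>p\<in>{p. prime p \<and> p \<le> card T}. p) = N * k" by (auto elim: dvdE)
  thus ?thesis using wN by (simp add: power_mult)
qed


lemma ru_div: "root_of_unity x \<Longrightarrow> root_of_unity y \<Longrightarrow> \<exists>n>0. (x / y) ^ n = 1"
proof -
  assume "root_of_unity x" "root_of_unity y"
  then obtain n m where n: "n > 0" "x ^ n = 1" and m: "m > 0" "y ^ m = 1"
    unfolding root_of_unity_def by blast
  have xx: "x ^ (n * m) = 1" by (simp add: power_mult n(2))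
  have yy: "y ^ (n * m) = 1" by (metis m(2) power_mult mult.commute power_one)
  have "(x / y) ^ (n * m) = 1" by (simp add: power_divide xx yy)
  thus ?thesis using n m by (intro exI[of _ "n * m"]) simp
qed

theorem theorem6:
  fixes k :: nat and a :: complex
    and c cs :: "nat \<Rightarrow> complex" and z zs :: "nat \<Rightarrow> complex"
  assumes "k \<ge> 1" and "a \<noteq> 0"
    and "\<forall>i\<in>{1..k}. c i \<in> \<rat> \<and> cs i \<in> \<rat>"
    and "\<forall>i\<in>{1..k}. root_of_unity (z i) \<and> root_of_unity (zs i)"
    and "(\<Sum>i=1..k. c i * z i) = a"
    and "(\<Sum>j=1..k. cs j * zs j) = a"
    and "\<forall>I. I \<noteq> {} \<and> I \<subset> {1..k} \<longrightarrow> (\<Sum>i\<in>I. c i * z i) \<noteq> 0"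
    and "\<forall>J. J \<noteq> {} \<and> J \<subset> {1..k} \<longrightarrow> (\<Sum>j\<in>J. cs j * zs j) \<noteq> 0"
  shows "\<forall>j\<in>{1..k}. \<exists>i\<in>{1..k}.
           (zs j / z i) ^ (\<Prod>p\<in>{p::nat. prime p \<and> p \<le> 2 * k}. p) = 1"
proof (intro ballI)
  note hrat = assms(3) and hru = assms(4) and ha = assms(5) and hb = assms(6) and hmin2 = assms(8)
  fix j assume j: "j \<in> {1..k}"
  define C where "C x = (if x \<le> k then c x else - cs (x - k))" for x
  define W where "W x = (if x \<le> k then z x else zs (x - k))" for x
  define U where "U = {1..2*k}"
  have finU: "finite U" by (simp add: U_def)
  have cardU: "card U = 2 * k" by (simp add: U_def)
  have hU: "C x \<in> \<rat> \<and> root_of_unity (W x)" if "x \<in> U" for x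
  proof (cases "x \<le> k")
    case True
    hence "x \<in> {1..k}" using that by (simp add: U_def)
    thus ?thesis using hrat hru True by (simp add: C_def W_def)
  next
    case False
    hence "x - k \<in> {1..k}" using that by (auto simp: U_def)
    thus ?thesis using hrat hru False by (simp add: C_def W_def)
  qed
  have shiftsum: "(\<Sum>x\<in>(\<lambda>i. i + k) ` J. C x * W x) = - (\<Sum>i\<in>J. cs i * zs i)" if "J \<subseteq> {1..k}" for J
  proof -
    have inj: "inj_on (\<lambda>i. i + k) J" by (simp add: inj_on_def)
    have "(\<Sum>x\<in>(\<lambda>i. i + k) ` J. C x * W x) = (\<Sum>i\<in>J. C (i + k) * W (i + k))"
      by (simp add: sum.reindex[OF inj])
    also have "\<dots> = (\<Sum>i\<in>J. - (cs i * zs i))"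
    proof (rule sum.cong[OF refl])
      fix i assume "i \<in> J"
      hence "i \<ge> 1" using that by auto
      thus "C (i + k) * W (i + k) = - (cs i * zs i)" by (simp add: C_def W_def)
    qed
    finally show ?thesis by (simp add: sum_negf)
  qed
  have U2: "U = {1..k} \<union> (\<lambda>i. i + k) ` {1..k}"
  proof -
    have "(\<lambda>i. i + k) ` {1..k} = {k+1..2*k}"
      by (auto simp: image_iff intro!: bexI[of _ "x - k" for x])
    thus ?thesis by (auto simp: U_def)
  qed
  have disj: "{1..k} \<inter> (\<lambda>i. i + k) ` {1..k} = {}" by auto
  have sumU: "(\<Sum>x\<in>U. C x * W x) = 0"
  proof -
    have "(\<Sum>x\<in>U. C x * W x) = (\<Sum>x\<in>{1..k}. C x * W x) + (\<Sum>x\<in>(\<lambda>i. i + k) ` {1..k}. C x * W x)"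
      unfolding U2 by (rule sum.union_disjoint) (simp_all add: disj)
    also have "(\<Sum>x\<in>{1..k}. C x * W x) = (\<Sum>i=1..k. c i * z i)"
      by (rule sum.cong) (simp_all add: C_def W_def)
    also have "(\<Sum>x\<in>(\<lambda>i. i + k) ` {1..k}. C x * W x) = - (\<Sum>i=1..k. cs i * zs i)"
      by (rule shiftsum) simp
    finally show ?thesis using ha hb by simp
  qed
  define jj where "jj = j + k"
  have jjU: "jj \<in> U" using j by (auto simp: U_def jj_def)
  define Tc where "Tc = {S. S \<subseteq> U \<and> jj \<in> S \<and> (\<Sum>x\<in>S. C x * W x) = 0}"
  have UTc: "U \<in> Tc" using jjU sumU by (simp add: Tc_def)
  define n0 where "n0 = (LEAST n. \<exists>S\<in>Tc. card S = n)"
  have "\<exists>S\<in>Tc. card S = n0" unfolding n0_def by (rule LeastI_ex) (use UTc in blast)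
  then obtain T where T: "T \<in> Tc" "card T = n0" by blast
  have Tmin: "card T \<le> card S" if "S \<in> Tc" for S
    unfolding T(2) n0_def by (rule Least_le) (use that in blast)
  have TU: "T \<subseteq> U" and jT: "jj \<in> T" and sT: "(\<Sum>x\<in>T. C x * W x) = 0" using T(1) by (auto simp: Tc_def)
  have finT: "finite T" using TU finU finite_subset by blast
  have minl: "\<forall>S. S \<noteq> {} \<and> S \<subset> T \<longrightarrow> (\<Sum>x\<in>S. C x * W x) \<noteq> 0"
  proof (intro allI impI notI)
    fix S assume S: "S \<noteq> {} \<and> S \<subset> T" and sS: "(\<Sum>x\<in>S. C x * W x) = 0"
    show False
    proof (cases "jj \<in> S")
      case True
      hence "S \<in> Tc" using S TU sS by (auto simp: Tc_def)
      hence "card T \<le> card S" by (rule Tmin)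
      moreover have "card S < card T" using S finT by (intro psubset_card_mono) auto
      ultimately show False by simp
    next
      case False
      have sub: "S \<subseteq> T" using S by blast
      have "(\<Sum>x\<in>T - S. C x * W x) = (\<Sum>x\<in>T. C x * W x) - (\<Sum>x\<in>S. C x * W x)"
        using finT sub by (rule sum_diff)
      hence "(\<Sum>x\<in>T - S. C x * W x) = 0" using sT sS by simp
      hence "T - S \<in> Tc" using TU jT False by (auto simp: Tc_def)
      hence "card T \<le> card (T - S)" by (rule Tmin)
      moreover have "card (T - S) < card T"
      proof -
        have "finite S" using sub finT finite_subset by blast
        moreover have "card S > 0" using S \<open>finite S\<close> by (simp add: card_gt_0_iff)
        ultimately show ?thesis using card_Diff_subset[OF _ sub] card_mono[OF finT sub] by simp
      qed
      ultimately show False by simp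
    qed
  qed
  have "\<exists>i\<in>T. i \<le> k"
  proof (rule ccontr)
    assume "\<not> ?thesis"
    hence gk: "\<forall>x\<in>T. x > k" by auto
    define J where "J = (\<lambda>x. x - k) ` T"
    have JT: "(\<lambda>i. i + k) ` J = T"
    proof -
      have "(\<lambda>i. i + k) ` J = (\<lambda>x. x - k + k) ` T" by (simp add: J_def image_image)
      also have "\<dots> = id ` T" by (rule image_cong) (use gk in auto)
      finally show ?thesis by simp
    qed
    have Jsub: "J \<subseteq> {1..k}"
    proof
      fix y assume "y \<in> J"
      then obtain x where x: "x \<in> T" "y = x - k" by (auto simp: J_def)
      have "x \<in> U" using TU x by blast
      hence "x \<le> 2 * k" by (simp add: U_def)
      with gk x show "y \<in> {1..k}" by auto
    qed
    have "(\<Sum>x\<in>T. C x * W x) = - (\<Sum>i\<in>J. cs i * zs i)" using shiftsum[OF Jsub] JT by simp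
    hence sJ: "(\<Sum>i\<in>J. cs i * zs i) = 0" using sT by simp
    have "j \<in> J" using jT by (auto simp: J_def jj_def image_iff intro!: bexI[of _ "j + k"])
    hence Jne: "J \<noteq> {}" by blast
    show False
    proof (cases "J = {1..k}")
      case True
      thus False using sJ hb assms(2) by simp
    next
      case False
      hence "J \<subset> {1..k}" using Jsub by blast
      thus False using hmin2 Jne sJ by blast
    qed
  qed
  then obtain i where iT: "i \<in> T" and ik: "i \<le> k" by blast
  have i1: "i \<in> {1..k}" using iT TU ik by (auto simp: U_def)
  have Wjj: "W jj = zs j" using j by (simp add: W_def jj_def)
  have Wi: "W i = z i" using ik by (simp add: W_def)
  have Wjj0: "W jj \<noteq> 0" using hU[OF jjU] unfolding root_of_unity_def by (metis power_0_left zero_neq_one not_gr0)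
  define w where "w x = W x / W jj" for x
  have mres: "\<forall>x\<in>T. w x ^ (\<Prod>p\<in>{p. prime p \<and> p \<le> card T}. p) = 1"
  proof (rule mann[OF finT jT])
    show "w jj = 1" using Wjj0 by (simp add: w_def)
    show "\<forall>x\<in>T. C x \<in> \<rat>" using hU TU by blast
    show "\<forall>x\<in>T. \<exists>n>0. w x ^ n = 1"
      using hU TU jjU by (auto simp: w_def intro!: ru_div)
    have eq: "(\<Sum>x\<in>S. C x * w x) = (\<Sum>x\<in>S. C x * W x) / W jj" for S
      by (simp add: w_def sum_divide_distrib)
    show "(\<Sum>x\<in>T. C x * w x) = 0" using sT by (simp add: eq)
    show "\<forall>S. S \<noteq> {} \<and> S \<subset> T \<longrightarrow> (\<Sum>x\<in>S. C x * w x) \<noteq> 0"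
      using minl Wjj0 by (simp add: eq)
  qed
  define m where "m = (\<Prod>p\<in>{p::nat. prime p \<and> p \<le> 2 * k}. p)"
  have "card T \<le> 2 * k" using card_mono[OF finU TU] cardU by simp
  hence "(\<Prod>p\<in>{p. prime p \<and> p \<le> card T}. p) dvd m" unfolding m_def
    by (intro prod_dvd_prod_subset) (auto intro: finite_subset[of _ "{..2*k}"])
  then obtain l where l: "m = (\<Prod>p\<in>{p. prime p \<and> p \<le> card T}. p) * l" by (auto elim: dvdE)
  have "w i ^ m = 1" using mres iT by (simp add: l power_mult)
  hence "(z i / zs j) ^ m = 1" by (simp add: w_def Wi Wjj)
  hence "(zs j / z i) ^ m = 1"
    by (metis inverse_divide power_inverse inverse_1)
  thus "\<exists>i\<in>{1..k}. (zs j / z i) ^ (\<Prod>p\<in>{p::nat. prime p \<and> p \<le> 2 * k}. p) = 1"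
    using i1 unfolding m_def by blast
qed

end
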